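(* Let $T>0$, $\Omega\subset\mathbb{R}^d$ a bounded domain, $\mathcal{S}=\mathrm{span}\{\psi_1,\ldots,\psi_s\}\subset L^2(0,T)$ a nodal basis with $\psi_1$ the nodal function associated with $t=0$ (so $\psi_1(0)=1$, $\psi_j(0)=0$ for $j\geq 2$), and $\mathcal{Y}=\mathrm{span}\{\nu_1,\ldots,\nu_q\}\subset L^2(\Omega)$. Let $\mathbf{M}_{\mathcal{S}}=\mathbf{L}_{\mathcal{S}}\mathbf{L}_{\mathcal{S}}^T$ with $\mathbf{L}_{\mathcal{S}}$ an invertible upper-triangular factor and $\mathbf{M}_{\mathcal{Y}}=\mathbf{L}_{\mathcal{Y}}\mathbf{L}_{\mathcal{Y}}^T$. Let $\mathbf{X}_{\mathscr{S}\cdot\mathcal{Y}}$ be the coefficient matrix of a function in $\mathscr{S}\cdot\mathcal{Y}$, let $\hat{\mathcal{S}}$ be the reduced time space of dimension $\hat s\geq 2$ constructed (as described in the context) from $\mathbf{X}_{\mathscr{S}\cdot\mathcal{Y}}$, and let $\mathbf{X}_{\hat{\mathscr{S}}\cdot\mathcal{Y}}$ be the coefficient matrix (with respect to the basis $\{\psi_j\nu_i\}$) of the projection of this function onto $\hat{\mathscr{S}}\cdot\mathcal{Y}$. Let $\mathring{\mathbf{X}}_{\mathscr{S}\cdot\mathcal{Y}}$ and $\mathring{\mathbf{X}}_{\hat{\mathscr{S}}\cdot\mathcal{Y}}$ result from setting the first column of $\mathbf{X}_{\mathscr{S}\cdot\mathcal{Y}}$ and $\mathbf{X}_{\hat{\mathscr{S}}\cdot\mathcal{Y}}$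 to zero. Then $$\mathring{\mathbf{X}}_{\hat{\mathscr{S}}\cdot\mathcal{Y}}=\mathring{\mathbf{X}}_{\mathscr{S}\cdot\mathcal{Y}}\mathbf{L}_{\mathcal{S}}\mathring{U}_{\hat s-1}\mathring{U}_{\hat s-1}^T\mathbf{L}_{\mathcal{S}}^{-1},$$ where the columns of $\mathring{U}_{\hat s-1}$ are the $\hat s-1$ leading right singular vectors of $\mathbf{L}_{\mathcal{Y}}^T\mathring{\mathbf{X}}_{\mathscr{S}\cdot\mathcal{Y}}\mathbf{L}_{\mathcal{S}}$.
   Context: $\mathcal{S}\cdot\mathcal{Y}$ is the span of the products $\psi_j\nu_i$; each element is $x=\sum_{j,i}\mathbf{x}_{i,j}\nu_i\psi_j$ with coefficient matrix $\mathbf{X}=[\mathbf{x}_{i,j}]\in\mathbb{R}^{q\times s}$. Inner product $(x_1,x_2)_{\mathcal{S}\cdot\mathcal{Y}}=\int_0^T\int_\Omega x_1x_2$. Gramians: $\mathbf{M}_{\mathcal{S}}=[(\psi_i,\psi_j)_{L^2(0,T)}]$, $\mathbf{M}_{\mathcal{Y}}=[(\nu_i,\nu_j)_{L^2(\Omega)}]$. For $x_0$ given, $\Pi_{\mathcal{Y}}$ is the $L^2(\Omega)$-orthogonal projection onto $\mathcal{Y}$ and $\mathscr{S}\cdot\mathcal{Y}=\{x\in\mathcal{S}\cdot\mathcal{Y}: x(0)=\Pi_{\mathcal{Y}}x_0\}$. Construction of the initial-condition-adapted reduced time space from a coefficient matrix $\mathbf{Z}\in\mathbb{R}^{q\times s}$: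 let $\mathring{\mathbf{Z}}$ be $\mathbf{Z}$ with its first column set to zero; let $\mathring{U}_{\hat s-1}$ be the matrix of the $\hat s-1$ leading right singular vectors of $\mathbf{L}_{\mathcal{Y}}^T\mathring{\mathbf{Z}}\mathbf{L}_{\mathcal{S}}$; set $U_{\hat s}=[(\mathbf{L}_{\mathcal{S}}^T)_{:,1}\;\mathring{U}_{\hat s-1}]\in\mathbb{R}^{s\times\hat s}$, where $(\mathbf{L}_{\mathcal{S}}^T)_{:,1}$ is the first column of $\mathbf{L}_{\mathcal{S}}^T$; define $[\hat\psi_1,\ldots,\hat\psi_{\hat s}]^T=U_{\hat s}^T\mathbf{L}_{\mathcal{S}}^{-1}[\psi_1,\ldots,\psi_s]^T$ and $\hat{\mathcal{S}}=\mathrm{span}\{\hat\psi_1,\ldots,\hat\psi_{\hat s}\}$ (so $\hat\psi_1=\psi_1$ and $\hat\psi_j(0)=0$ for $j\ge 2$). $\hat{\mathcal{S}}\cdot\mathcal{Y}$ is the span of $\hat\psi_j\nu_i$ and $\hat{\mathscr{S}}\cdot\mathcal{Y}=\{\hat x\in\hat{\mathcal{S}}\cdot\mathcal{Y}:\hat x(0)=\Pi_{\mathcal{Y}}x_0\}$; the projection onto it is the $(\cdot,\cdot)_{\mathcal{S}\cdot\mathcal{Y}}$-orthogonal projection onto $\hat{\mathcal{S}}\cdot\mathcal{Y}$. *)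

theory Defs
  imports "HOL-Analysis.Analysis" "Jordan_Normal_Form.Matrix"
begin

text \<open>Matrices are Jordan_Normal_Form matrices; all indices are 0-based, so the paper's
  \<open>\<psi>_1\<close> is \<open>\<psi> 0\<close>, the paper's "first column" is column 0, etc.\<close>

definition inv_m :: "real mat \<Rightarrow> real mat" where
  "inv_m A = (SOME B. B \<in> carrier_mat (dim_row A) (dim_row A) \<and>
                      A * B = 1\<^sub>m (dim_row A) \<and> B * A = 1\<^sub>m (dim_row A))"

definition orthonormal_cols :: "real mat \<Rightarrow> bool" where
  "orthonormal_cols V \<longleftrightarrow> transpose_mat V * V = 1\<^sub>m (dim_col V)"

definition is_svd :: "real mat \<Rightarrow> real mat \<Rightarrow> real mat \<Rightarrow> real mat \<Rightarrow> bool" where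
  "is_svd W P Sig V \<longleftrightarrow>
     P \<in> carrier_mat (dim_row W) (dim_row W) \<and> orthonormal_cols P \<and>
     V \<in> carrier_mat (dim_col W) (dim_col W) \<and> orthonormal_cols V \<and>
     Sig \<in> carrier_mat (dim_row W) (dim_col W) \<and>
     (\<forall>i<dim_row W. \<forall>j<dim_col W. i \<noteq> j \<longrightarrow> Sig $$ (i,j) = 0) \<and>
     (\<forall>i<min (dim_row W) (dim_col W). Sig $$ (i,i) \<ge> 0) \<and>
     (\<forall>i j. i \<le> j \<longrightarrow> j < min (dim_row W) (dim_col W) \<longrightarrow> Sig $$ (j,j) \<le> Sig $$ (i,i)) \<and>
     W = P * Sig * transpose_mat V"

definition lead_cols :: "nat \<Rightarrow> real mat \<Rightarrow> real mat" where
  "lead_cols k V = mat (dim_row V) k (\<lambda>(i,j). V $$ (i,j))"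

definition ring :: "real mat \<Rightarrow> real mat" where
  "ring X = mat (dim_row X) (dim_col X) (\<lambda>(i,j). if j = 0 then 0 else X $$ (i,j))"

definition stfun :: "(nat \<Rightarrow> real \<Rightarrow> real) \<Rightarrow> (nat \<Rightarrow> 'a \<Rightarrow> real) \<Rightarrow> real mat \<Rightarrow> real \<Rightarrow> 'a \<Rightarrow> real" where
  "stfun \<psi> \<nu> X t y = (\<Sum>i<dim_row X. \<Sum>j<dim_col X. X $$ (i,j) * \<nu> i y * \<psi> j t)"

definition st_inner :: "real \<Rightarrow> 'a::euclidean_space set \<Rightarrow> (real \<Rightarrow> 'a \<Rightarrow> real) \<Rightarrow> (real \<Rightarrow> 'a \<Rightarrow> real) \<Rightarrow> real" where
  "st_inner T \<Omega> f g = (LINT t:{0..T}|lborel. (LINT y:\<Omega>|lborel. f t y * g t y))"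

definition gram_S :: "real \<Rightarrow> nat \<Rightarrow> (nat \<Rightarrow> real \<Rightarrow> real) \<Rightarrow> real mat" where
  "gram_S T s \<psi> = mat s s (\<lambda>(i,j). LINT t:{0..T}|lborel. \<psi> i t * \<psi> j t)"

definition gram_Y :: "'a::euclidean_space set \<Rightarrow> nat \<Rightarrow> (nat \<Rightarrow> 'a \<Rightarrow> real) \<Rightarrow> real mat" where
  "gram_Y \<Omega> q \<nu> = mat q q (\<lambda>(i,j). LINT y:\<Omega>|lborel. \<nu> i y * \<nu> j y)"

definition is_proj_Y :: "'a::euclidean_space set \<Rightarrow> nat \<Rightarrow> (nat \<Rightarrow> 'a \<Rightarrow> real) \<Rightarrow> ('a \<Rightarrow> real) \<Rightarrow> (nat \<Rightarrow> real) \<Rightarrow> bool" where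
  "is_proj_Y \<Omega> q \<nu> x0 c \<longleftrightarrow>
     (\<forall>k<q. (LINT y:\<Omega>|lborel. (x0 y - (\<Sum>i<q. c i * \<nu> i y)) * \<nu> k y) = 0)"

definition init_ok :: "'a::euclidean_space set \<Rightarrow> nat \<Rightarrow> (nat \<Rightarrow> real \<Rightarrow> real) \<Rightarrow> (nat \<Rightarrow> 'a \<Rightarrow> real) \<Rightarrow> ('a \<Rightarrow> real) \<Rightarrow> real mat \<Rightarrow> bool" where
  "init_ok \<Omega> q \<psi> \<nu> x0 X \<longleftrightarrow>
     (\<exists>c. is_proj_Y \<Omega> q \<nu> x0 c \<and>
          (AE y in lborel. y \<in> \<Omega> \<longrightarrow> stfun \<psi> \<nu> X 0 y = (\<Sum>i<q. c i * \<nu> i y)))"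

definition U_hat :: "real mat \<Rightarrow> real mat \<Rightarrow> real mat" where
  "U_hat LS Ur = mat (dim_row Ur) (dim_col Ur + 1)
      (\<lambda>(i,j). if j = 0 then transpose_mat LS $$ (i,0) else Ur $$ (i, j - 1))"

text \<open>coefficient matrices (w.r.t. psi_j nu_i) of the elements of Shat.Y, where
  [psihat_1..psihat_shat]^T = U^T L_S^{-1} [psi_1..psi_s]^T : an element
  sum_{i,k} Z_{ik} nu_i psihat_k has psi-coefficients Z * U^T * L_S^{-1}\<close>
definition in_hatSY :: "nat \<Rightarrow> real mat \<Rightarrow> real mat \<Rightarrow> real mat \<Rightarrow> bool" where
  "in_hatSY q U LS X \<longleftrightarrow>
     (\<exists>Z \<in> carrier_mat q (dim_col U). X = Z * (transpose_mat U * inv_m LS))"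

definition is_proj_hat :: "real \<Rightarrow> 'a::euclidean_space set \<Rightarrow> nat \<Rightarrow> (nat \<Rightarrow> real \<Rightarrow> real) \<Rightarrow>
    (nat \<Rightarrow> 'a \<Rightarrow> real) \<Rightarrow> ('a \<Rightarrow> real) \<Rightarrow> real mat \<Rightarrow> real mat \<Rightarrow> real mat \<Rightarrow> real mat \<Rightarrow> bool" where
  "is_proj_hat T \<Omega> q \<psi> \<nu> x0 U LS X Xp \<longleftrightarrow>
     Xp \<in> carrier_mat (dim_row X) (dim_col X) \<and>
     in_hatSY q U LS Xp \<and> init_ok \<Omega> q \<psi> \<nu> x0 Xp \<and>
     (\<forall>Z \<in> carrier_mat (dim_row X) (dim_col X). in_hatSY q U LS Z \<longrightarrow> init_ok \<Omega> q \<psi> \<nu> x0 Z \<longrightarrow>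
        st_inner T \<Omega> (stfun \<psi> \<nu> (X - Xp)) (stfun \<psi> \<nu> (Z - Xp)) = 0)"

end

theory Submission
  imports Defs "Jordan_Normal_Form.Determinant"
begin
lemma L2_prod:
  fixes f g :: "'b::euclidean_space \<Rightarrow> real"
  assumes "set_borel_measurable lborel A f" "set_integrable lborel A (\<lambda>x. (f x)\<^sup>2)"
    "set_borel_measurable lborel A g" "set_integrable lborel A (\<lambda>x. (g x)\<^sup>2)"
  shows "set_integrable lborel A (\<lambda>x. f x * g x)"
proof (rule set_integrable_bound[where f="\<lambda>x. (f x)\<^sup>2 + (g x)\<^sup>2"])
  show "set_integrable lborel A (\<lambda>x. (f x)\<^sup>2 + (g x)\<^sup>2)"
    using assms by (intro set_integral_add) auto
  have "(\<lambda>x. indicator A x *\<^sub>R (f x * g x)) = (\<lambda>x. (indicator A x *\<^sub>R f x) * (indicator A x *\<^sub>R g x))"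
    by (auto simp: indicator_def)
  moreover have "(\<lambda>x. (indicator A x *\<^sub>R f x) * (indicator A x *\<^sub>R g x)) \<in> borel_measurable lborel"
    using assms(1,3) unfolding set_borel_measurable_def by measurable
  ultimately show "set_borel_measurable lborel A (\<lambda>x. f x * g x)"
    unfolding set_borel_measurable_def by simp
  show "AE x in lborel. x \<in> A \<longrightarrow> norm (f x * g x) \<le> norm ((f x)\<^sup>2 + (g x)\<^sup>2)"
  proof (intro AE_I2 impI)
    fix x
    have a: "2 * (\<bar>f x\<bar> * \<bar>g x\<bar>) \<le> (f x)\<^sup>2 + (g x)\<^sup>2"
      using sum_squares_bound[of "\<bar>f x\<bar>" "\<bar>g x\<bar>"] by (simp add: mult.assoc)
    have b: "0 \<le> \<bar>f x\<bar> * \<bar>g x\<bar>" by simp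
    have c: "\<bar>f x * g x\<bar> \<le> (f x)\<^sup>2 + (g x)\<^sup>2"
      unfolding abs_mult using a b by linarith
    have d: "norm ((f x)\<^sup>2 + (g x)\<^sup>2) = (f x)\<^sup>2 + (g x)\<^sup>2"
      by (simp add: abs_of_nonneg)
    show "norm (f x * g x) \<le> norm ((f x)\<^sup>2 + (g x)\<^sup>2)"
      unfolding d using c by simp
  qed
qed

lemma set_integrable_sum':
  fixes f :: "'i \<Rightarrow> 'b \<Rightarrow> real"
  assumes "\<And>i. i \<in> I \<Longrightarrow> set_integrable M A (f i)"
  shows "set_integrable M A (\<lambda>x. \<Sum>i\<in>I. f i x)"
  using assms unfolding set_integrable_def by (simp add: sum_distrib_left)

lemma set_integral_sum':
  fixes f :: "'i \<Rightarrow> 'b \<Rightarrow> real"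
  assumes "\<And>i. i \<in> I \<Longrightarrow> set_integrable M A (f i)"
  shows "(LINT x:A|M. (\<Sum>i\<in>I. f i x)) = (\<Sum>i\<in>I. LINT x:A|M. f i x)"
  using assms unfolding set_integrable_def set_lebesgue_integral_def
  by (simp add: sum_distrib_left integral_sum)

lemma int_sum1:
  fixes g :: "nat \<Rightarrow> 'b \<Rightarrow> real"
  assumes "\<And>i. i < a \<Longrightarrow> set_integrable M A (g i)"
  shows "(LINT x:A|M. (\<Sum>i<a. g i x)) = (\<Sum>i<a. (LINT x:A|M. g i x))"
    "set_integrable M A (\<lambda>x. \<Sum>i<a. g i x)"
  using assms by (auto intro!: set_integral_sum' set_integrable_sum')

lemma int_sum2:
  fixes g :: "nat \<Rightarrow> nat \<Rightarrow> 'b \<Rightarrow> real"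
  assumes "\<And>i j. i < a \<Longrightarrow> j < b \<Longrightarrow> set_integrable M A (g i j)"
  shows "(LINT x:A|M. (\<Sum>i<a. \<Sum>j<b. cf i j * g i j x))
       = (\<Sum>i<a. \<Sum>j<b. cf i j * (LINT x:A|M. g i j x))"
    "set_integrable M A (\<lambda>x. \<Sum>i<a. \<Sum>j<b. cf i j * g i j x)"
proof -
  have I1: "set_integrable M A (\<lambda>x. cf i j * g i j x)" if "i < a" "j < b" for i j
    using assms that by auto
  have I2: "set_integrable M A (\<lambda>x. \<Sum>j<b. cf i j * g i j x)" if "i < a" for i
    by (rule int_sum1(2), rule I1) (use that in auto)
  show "set_integrable M A (\<lambda>x. \<Sum>i<a. \<Sum>j<b. cf i j * g i j x)"
    by (rule int_sum1(2), rule I2)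
  have "(LINT x:A|M. (\<Sum>i<a. \<Sum>j<b. cf i j * g i j x)) = (\<Sum>i<a. LINT x:A|M. (\<Sum>j<b. cf i j * g i j x))"
    by (rule int_sum1(1), rule I2)
  also have "\<dots> = (\<Sum>i<a. \<Sum>j<b. LINT x:A|M. cf i j * g i j x)"
    by (rule sum.cong, rule refl, rule int_sum1(1), rule I1) auto
  finally show "(LINT x:A|M. (\<Sum>i<a. \<Sum>j<b. cf i j * g i j x))
       = (\<Sum>i<a. \<Sum>j<b. cf i j * (LINT x:A|M. g i j x))" by simp
qed

lemma int_sum4:
  fixes g :: "nat \<Rightarrow> nat \<Rightarrow> nat \<Rightarrow> nat \<Rightarrow> 'b \<Rightarrow> real"
  assumes "\<And>i j k l. i < a \<Longrightarrow> j < b \<Longrightarrow> k < c \<Longrightarrow> l < d \<Longrightarrow> set_integrable M A (g i j k l)"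
  shows "(LINT x:A|M. (\<Sum>i<a. \<Sum>j<b. \<Sum>k<c. \<Sum>l<d. cf i j k l * g i j k l x))
       = (\<Sum>i<a. \<Sum>j<b. \<Sum>k<c. \<Sum>l<d. cf i j k l * (LINT x:A|M. g i j k l x))"
proof -
  have I2: "set_integrable M A (\<lambda>x. \<Sum>k<c. \<Sum>l<d. cf i j k l * g i j k l x)" if "i < a" "j < b" for i j
    using assms that by (intro int_sum2(2))
  have "(LINT x:A|M. (\<Sum>i<a. \<Sum>j<b. \<Sum>k<c. \<Sum>l<d. cf i j k l * g i j k l x))
     = (\<Sum>i<a. \<Sum>j<b. 1 * (LINT x:A|M. (\<Sum>k<c. \<Sum>l<d. cf i j k l * g i j k l x)))"
    using int_sum2(1)[of a b M A "\<lambda>i j x. \<Sum>k<c. \<Sum>l<d. cf i j k l * g i j k l x" "\<lambda>i j. 1"] I2 by simp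
  also have "\<dots> = (\<Sum>i<a. \<Sum>j<b. \<Sum>k<c. \<Sum>l<d. cf i j k l * (LINT x:A|M. g i j k l x))"
    using assms by (intro sum.cong refl) (simp add: int_sum2(1))
  finally show ?thesis .
qed

lemma stfun_prod:
  assumes "A \<in> carrier_mat q s" "C \<in> carrier_mat q s"
  shows "stfun \<psi> \<nu> A t y * stfun \<psi> \<nu> C t y =
    (\<Sum>i<q. \<Sum>j<s. \<Sum>k<q. \<Sum>l<s. (A $$ (i,j) * C $$ (k,l) * \<psi> j t * \<psi> l t) * (\<nu> i y * \<nu> k y))"
proof -
  have "stfun \<psi> \<nu> A t y * stfun \<psi> \<nu> C t y =
    (\<Sum>i<q. \<Sum>k<q. \<Sum>j<s. \<Sum>l<s. (A $$ (i,j) * \<nu> i y * \<psi> j t) * (C $$ (k,l) * \<nu> k y * \<psi> l t))"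
    using assms by (simp only: stfun_def sum_product carrier_matD)
  also have "\<dots> = (\<Sum>i<q. \<Sum>j<s. \<Sum>k<q. \<Sum>l<s. (A $$ (i,j) * \<nu> i y * \<psi> j t) * (C $$ (k,l) * \<nu> k y * \<psi> l t))"
    by (rule sum.cong[OF refl], rule sum.swap)
  also have "\<dots> = (\<Sum>i<q. \<Sum>j<s. \<Sum>k<q. \<Sum>l<s. (A $$ (i,j) * C $$ (k,l) * \<psi> j t * \<psi> l t) * (\<nu> i y * \<nu> k y))"
    by (simp add: mult_ac)
  finally show ?thesis .
qed

lemma gram_formula:
  fixes \<Omega> :: "'a::euclidean_space set"
  assumes psi_L2: "\<And>j. j < s \<Longrightarrow> set_borel_measurable lborel {0..T} (\<psi> j)
                     \<and> set_integrable lborel {0..T} (\<lambda>t. (\<psi> j t)\<^sup>2)"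
    and nu_L2: "\<And>i. i < q \<Longrightarrow> set_borel_measurable lborel \<Omega> (\<nu> i)
                     \<and> set_integrable lborel \<Omega> (\<lambda>y. (\<nu> i y)\<^sup>2)"
    and AC: "A \<in> carrier_mat q s" "C \<in> carrier_mat q s"
  shows "st_inner T \<Omega> (stfun \<psi> \<nu> A) (stfun \<psi> \<nu> C) =
    (\<Sum>i<q. \<Sum>j<s. \<Sum>k<q. \<Sum>l<s. A $$ (i,j) * C $$ (k,l) * (LINT y:\<Omega>|lborel. \<nu> i y * \<nu> k y)
        * (LINT t:{0..T}|lborel. \<psi> j t * \<psi> l t))"
proof -
  have inu: "set_integrable lborel \<Omega> (\<lambda>y. \<nu> i y * \<nu> k y)" if "i < q" "k < q" for i k
    by (rule L2_prod) (use nu_L2[OF that(1)] nu_L2[OF that(2)] in auto)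
  have ipsi: "set_integrable lborel {0..T} (\<lambda>t. \<psi> j t * \<psi> l t)" if "j < s" "l < s" for j l
    by (rule L2_prod) (use psi_L2[OF that(1)] psi_L2[OF that(2)] in auto)
  have inner: "(LINT y:\<Omega>|lborel. stfun \<psi> \<nu> A t y * stfun \<psi> \<nu> C t y) =
     (\<Sum>i<q. \<Sum>j<s. \<Sum>k<q. \<Sum>l<s. (A $$ (i,j) * C $$ (k,l) * (LINT y:\<Omega>|lborel. \<nu> i y * \<nu> k y))
        * (\<psi> j t * \<psi> l t))" for t
  proof -
    have "(LINT y:\<Omega>|lborel. stfun \<psi> \<nu> A t y * stfun \<psi> \<nu> C t y) =
      (LINT y:\<Omega>|lborel. (\<Sum>i<q. \<Sum>j<s. \<Sum>k<q. \<Sum>l<s. (A $$ (i,j) * C $$ (k,l) * \<psi> j t * \<psi> l t) * (\<nu> i y * \<nu> k y)))"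
      by (simp only: stfun_prod[OF AC])
    also have "\<dots> = (\<Sum>i<q. \<Sum>j<s. \<Sum>k<q. \<Sum>l<s. (A $$ (i,j) * C $$ (k,l) * \<psi> j t * \<psi> l t) * (LINT y:\<Omega>|lborel. \<nu> i y * \<nu> k y))"
      by (rule int_sum4[where g="\<lambda>i j k l y. \<nu> i y * \<nu> k y"]) (rule inu)
    finally show ?thesis by (simp add: mult_ac)
  qed
  have "st_inner T \<Omega> (stfun \<psi> \<nu> A) (stfun \<psi> \<nu> C) =
    (LINT t:{0..T}|lborel. (\<Sum>i<q. \<Sum>j<s. \<Sum>k<q. \<Sum>l<s. (A $$ (i,j) * C $$ (k,l) * (LINT y:\<Omega>|lborel. \<nu> i y * \<nu> k y))
        * (\<psi> j t * \<psi> l t)))"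
    unfolding st_inner_def inner ..
  also have "\<dots> = (\<Sum>i<q. \<Sum>j<s. \<Sum>k<q. \<Sum>l<s. (A $$ (i,j) * C $$ (k,l) * (LINT y:\<Omega>|lborel. \<nu> i y * \<nu> k y))
        * (LINT t:{0..T}|lborel. \<psi> j t * \<psi> l t))"
    by (rule int_sum4[where g="\<lambda>i j k l t. \<psi> j t * \<psi> l t"]) (rule ipsi)
  finally show ?thesis .
qed

lemma MY_pos:
  fixes \<Omega> :: "'a::euclidean_space set" and \<nu> :: "nat \<Rightarrow> 'a \<Rightarrow> real" and d :: "nat \<Rightarrow> real"
  assumes nu_L2: "\<And>i. i < q \<Longrightarrow> set_borel_measurable lborel \<Omega> (\<nu> i)
                     \<and> set_integrable lborel \<Omega> (\<lambda>y. (\<nu> i y)\<^sup>2)"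
    and nu_basis: "\<And>c. (AE y in lborel. y \<in> \<Omega> \<longrightarrow> (\<Sum>i<q. c i * \<nu> i y) = 0) \<Longrightarrow> \<forall>i<q. c i = 0"
    and d: "\<And>k. k < q \<Longrightarrow> (\<Sum>i<q. (LINT y:\<Omega>|lborel. \<nu> k y * \<nu> i y) * d i) = 0"
  shows "\<forall>i<q. d i = 0"
proof -
  have inu: "set_integrable lborel \<Omega> (\<lambda>y. \<nu> i y * \<nu> k y)" if "i < q" "k < q" for i k
    by (rule L2_prod) (use nu_L2[OF that(1)] nu_L2[OF that(2)] in auto)
  define f where "f y = (\<Sum>i<q. d i * \<nu> i y)" for y
  have ff: "f y * f y = (\<Sum>k<q. \<Sum>i<q. (d k * d i) * (\<nu> k y * \<nu> i y))" for y
    unfolding f_def by (simp add: sum_distrib_left sum_distrib_right mult_ac)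
  have int: "set_integrable lborel \<Omega> (\<lambda>y. f y * f y)"
    unfolding ff by (rule int_sum2(2)) (rule inu)
  have "(LINT y:\<Omega>|lborel. f y * f y) = (\<Sum>k<q. \<Sum>i<q. (d k * d i) * (LINT y:\<Omega>|lborel. \<nu> k y * \<nu> i y))"
    unfolding ff by (rule int_sum2(1)) (rule inu)
  also have "\<dots> = (\<Sum>k<q. d k * (\<Sum>i<q. (LINT y:\<Omega>|lborel. \<nu> k y * \<nu> i y) * d i))"
    by (simp add: sum_distrib_left mult_ac)
  also have "\<dots> = 0" using d by simp
  finally have z: "(LINT y:\<Omega>|lborel. f y * f y) = 0" .
  have "AE y in lborel. indicator \<Omega> y *\<^sub>R (f y * f y) = 0"
    using z int unfolding set_integrable_def set_lebesgue_integral_def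
    by (subst integral_nonneg_eq_0_iff_AE[symmetric]) (auto simp: indicator_def)
  then have "AE y in lborel. y \<in> \<Omega> \<longrightarrow> (\<Sum>i<q. d i * \<nu> i y) = 0"
    by eventually_elim (auto simp: f_def indicator_def)
  then show ?thesis by (rule nu_basis)
qed

lemma proj_expand:
  fixes \<Omega> :: "'a::euclidean_space set" and \<nu> :: "nat \<Rightarrow> 'a \<Rightarrow> real" and c :: "nat \<Rightarrow> real"
  assumes nu_L2: "\<And>i. i < q \<Longrightarrow> set_borel_measurable lborel \<Omega> (\<nu> i)
                     \<and> set_integrable lborel \<Omega> (\<lambda>y. (\<nu> i y)\<^sup>2)"
    and x0_L2: "set_borel_measurable lborel \<Omega> x0" "set_integrable lborel \<Omega> (\<lambda>y. (x0 y)\<^sup>2)"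
    and k: "k < q"
  shows "(LINT y:\<Omega>|lborel. (x0 y - (\<Sum>i<q. c i * \<nu> i y)) * \<nu> k y)
       = (LINT y:\<Omega>|lborel. x0 y * \<nu> k y) - (\<Sum>i<q. c i * (LINT y:\<Omega>|lborel. \<nu> i y * \<nu> k y))"
proof -
  have inu: "set_integrable lborel \<Omega> (\<lambda>y. \<nu> i y * \<nu> k y)" if "i < q" for i
    by (rule L2_prod) (use nu_L2[OF that] nu_L2[OF k] in auto)
  have ix: "set_integrable lborel \<Omega> (\<lambda>y. x0 y * \<nu> k y)"
    by (rule L2_prod) (use x0_L2 nu_L2[OF k] in auto)
  have e: "(x0 y - (\<Sum>i<q. c i * \<nu> i y)) * \<nu> k y = x0 y * \<nu> k y - (\<Sum>i<q. \<Sum>j<Suc 0. c i * (\<nu> i y * \<nu> k y))" for y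
    by (simp add: sum_distrib_left sum_distrib_right algebra_simps)
  have "(LINT y:\<Omega>|lborel. (x0 y - (\<Sum>i<q. c i * \<nu> i y)) * \<nu> k y)
      = (LINT y:\<Omega>|lborel. x0 y * \<nu> k y) - (LINT y:\<Omega>|lborel. (\<Sum>i<q. \<Sum>j<Suc 0. c i * (\<nu> i y * \<nu> k y)))"
    unfolding e
    by (rule set_integral_diff(2)[OF ix], rule int_sum2(2)[where g="\<lambda>i j y. \<nu> i y * \<nu> k y"], rule inu)
  also have "(LINT y:\<Omega>|lborel. (\<Sum>i<q. \<Sum>j<Suc 0. c i * (\<nu> i y * \<nu> k y)))
     = (\<Sum>i<q. \<Sum>j<Suc 0. c i * (LINT y:\<Omega>|lborel. \<nu> i y * \<nu> k y))"
    by (rule int_sum2(1)[where g="\<lambda>i j y. \<nu> i y * \<nu> k y"], rule inu)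
  finally show ?thesis by simp
qed

lemma proj_unique:
  fixes \<Omega> :: "'a::euclidean_space set" and \<nu> :: "nat \<Rightarrow> 'a \<Rightarrow> real" and c c' :: "nat \<Rightarrow> real"
  assumes nu_L2: "\<And>i. i < q \<Longrightarrow> set_borel_measurable lborel \<Omega> (\<nu> i)
                     \<and> set_integrable lborel \<Omega> (\<lambda>y. (\<nu> i y)\<^sup>2)"
    and nu_basis: "\<And>c. (AE y in lborel. y \<in> \<Omega> \<longrightarrow> (\<Sum>i<q. c i * \<nu> i y) = 0) \<Longrightarrow> \<forall>i<q. c i = 0"
    and x0_L2: "set_borel_measurable lborel \<Omega> x0" "set_integrable lborel \<Omega> (\<lambda>y. (x0 y)\<^sup>2)"
    and p: "is_proj_Y \<Omega> q \<nu> x0 c" "is_proj_Y \<Omega> q \<nu> x0 c'"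
  shows "\<forall>i<q. c i = c' i"
proof -
  have "\<forall>i<q. c i - c' i = 0"
  proof (rule MY_pos[OF nu_L2 nu_basis], assumption+)
    fix k assume k: "k < q"
    have h1: "(LINT y:\<Omega>|lborel. x0 y * \<nu> k y) - (\<Sum>i<q. c i * (LINT y:\<Omega>|lborel. \<nu> i y * \<nu> k y)) = 0"
      using p(1) k proj_expand[where q=q and \<Omega>=\<Omega> and \<nu>=\<nu> and k=k and c=c, OF nu_L2 x0_L2 k] unfolding is_proj_Y_def by auto
    have h2: "(LINT y:\<Omega>|lborel. x0 y * \<nu> k y) - (\<Sum>i<q. c' i * (LINT y:\<Omega>|lborel. \<nu> i y * \<nu> k y)) = 0"
      using p(2) k proj_expand[where q=q and \<Omega>=\<Omega> and \<nu>=\<nu> and k=k and c=c', OF nu_L2 x0_L2 k] unfolding is_proj_Y_def by auto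
    have sym: "(LINT y:\<Omega>|lborel. \<nu> k y * \<nu> i y) = (LINT y:\<Omega>|lborel. \<nu> i y * \<nu> k y)" for i
      by (simp add: mult.commute)
    have "(\<Sum>i<q. (LINT y:\<Omega>|lborel. \<nu> k y * \<nu> i y) * (c i - c' i))
        = (\<Sum>i<q. c i * (LINT y:\<Omega>|lborel. \<nu> i y * \<nu> k y)) - (\<Sum>i<q. c' i * (LINT y:\<Omega>|lborel. \<nu> i y * \<nu> k y))"
      unfolding sym by (simp add: sum_subtractf[symmetric] algebra_simps)
    then show "(\<Sum>i<q. (LINT y:\<Omega>|lborel. \<nu> k y * \<nu> i y) * (c i - c' i)) = 0"
      using h1 h2 by linarith
  qed
  then show ?thesis by auto
qed

lemma stfun_at0:
  fixes \<psi> :: "nat \<Rightarrow> real \<Rightarrow> real" and A :: "real mat" and \<nu> :: "nat \<Rightarrow> 'a \<Rightarrow> real"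
  assumes A: "A \<in> carrier_mat q s" and s: "s \<ge> 1"
    and nodal: "\<psi> 0 0 = 1" "\<And>j. 0 < j \<Longrightarrow> j < s \<Longrightarrow> \<psi> j 0 = 0"
  shows "stfun \<psi> \<nu> A 0 y = (\<Sum>i<q. A $$ (i,0) * \<nu> i y)"
proof -
  obtain s' where s': "s = Suc s'" using s by (cases s) auto
  have "(\<Sum>j<s. A $$ (i,j) * \<nu> i y * \<psi> j 0) = A $$ (i,0) * \<nu> i y" for i
    unfolding s' sum.lessThan_Suc_shift using nodal s' by simp
  then show ?thesis using A unfolding stfun_def by simp
qed

lemma init_col0:
  fixes \<Omega> :: "'a::euclidean_space set" and \<nu> :: "nat \<Rightarrow> 'a \<Rightarrow> real" and \<psi> :: "nat \<Rightarrow> real \<Rightarrow> real"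
  assumes nu_L2: "\<And>i. i < q \<Longrightarrow> set_borel_measurable lborel \<Omega> (\<nu> i)
                     \<and> set_integrable lborel \<Omega> (\<lambda>y. (\<nu> i y)\<^sup>2)"
    and nu_basis: "\<And>c. (AE y in lborel. y \<in> \<Omega> \<longrightarrow> (\<Sum>i<q. c i * \<nu> i y) = 0) \<Longrightarrow> \<forall>i<q. c i = 0"
    and x0_L2: "set_borel_measurable lborel \<Omega> x0" "set_integrable lborel \<Omega> (\<lambda>y. (x0 y)\<^sup>2)"
    and s: "s \<ge> 1"
    and nodal: "\<psi> 0 0 = 1" "\<And>j. 0 < j \<Longrightarrow> j < s \<Longrightarrow> \<psi> j 0 = 0"
    and A: "A \<in> carrier_mat q s" "init_ok \<Omega> q \<psi> \<nu> x0 A"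
    and B: "B \<in> carrier_mat q s" "init_ok \<Omega> q \<psi> \<nu> x0 B"
  shows "\<forall>i<q. A $$ (i,0) = B $$ (i,0)"
proof -
  have col: "\<forall>i<q. M $$ (i,0) = c i"
    if M: "M \<in> carrier_mat q s" and AE: "AE y in lborel. y \<in> \<Omega> \<longrightarrow> stfun \<psi> \<nu> M 0 y = (\<Sum>i<q. c i * \<nu> i y)"
    for M :: "real mat" and c :: "nat \<Rightarrow> real"
  proof -
    have "\<forall>i<q. M $$ (i,0) - c i = 0"
    proof (rule nu_basis)
      show "AE y in lborel. y \<in> \<Omega> \<longrightarrow> (\<Sum>i<q. (M $$ (i,0) - c i) * \<nu> i y) = 0"
        using AE
      proof eventually_elim
        case (elim y)
        then show ?case
          using stfun_at0[of M q s \<psi> \<nu> y, OF M s nodal] by (auto simp: algebra_simps sum_subtractf)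
      qed
    qed
    then show ?thesis by auto
  qed
  obtain ca where ca: "is_proj_Y \<Omega> q \<nu> x0 ca" "\<forall>i<q. A $$ (i,0) = ca i"
    using A col unfolding init_ok_def by blast
  obtain cb where cb: "is_proj_Y \<Omega> q \<nu> x0 cb" "\<forall>i<q. B $$ (i,0) = cb i"
    using B col unfolding init_ok_def by blast
  show ?thesis using proj_unique[OF nu_L2 nu_basis x0_L2 ca(1) cb(1)] ca(2) cb(2) by auto
qed

lemma mult_ix:
  "i < dim_row A \<Longrightarrow> j < dim_col B \<Longrightarrow> dim_col A = dim_row B \<Longrightarrow>
   (A * B) $$ (i,j) = (\<Sum>c<dim_row B. A $$ (i,c) * B $$ (c,j))"
  by (auto simp: scalar_prod_def atLeast0LessThan intro!: sum.cong)

lemma row_col_ix: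
  "i < dim_row A \<Longrightarrow> j < dim_col B \<Longrightarrow> dim_col A = dim_row B \<Longrightarrow>
   Matrix.row A i \<bullet> col B j = (\<Sum>c<dim_row B. A $$ (i,c) * B $$ (c,j))"
  by (auto simp: scalar_prod_def atLeast0LessThan intro!: sum.cong)

lemma col_col_ix:
  "i < dim_col A \<Longrightarrow> j < dim_col B \<Longrightarrow> dim_row A = dim_row B \<Longrightarrow>
   col A i \<bullet> col B j = (\<Sum>c<dim_row B. A $$ (c,i) * B $$ (c,j))"
  by (auto simp: scalar_prod_def atLeast0LessThan intro!: sum.cong)

lemma row_row_ix:
  "i < dim_row A \<Longrightarrow> j < dim_row B \<Longrightarrow> dim_col A = dim_col B \<Longrightarrow>
   Matrix.row A i \<bullet> Matrix.row B j = (\<Sum>c<dim_col B. A $$ (i,c) * B $$ (j,c))"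
  by (auto simp: scalar_prod_def atLeast0LessThan intro!: sum.cong)

lemma sum3_rot:
  "(\<Sum>c\<in>C. \<Sum>j\<in>J. \<Sum>i\<in>I. f i j c) = (\<Sum>i\<in>I. \<Sum>j\<in>J. \<Sum>c\<in>C. f i j c)"
proof -
  have "(\<Sum>c\<in>C. \<Sum>j\<in>J. \<Sum>i\<in>I. f i j c) = (\<Sum>c\<in>C. \<Sum>i\<in>I. \<Sum>j\<in>J. f i j c)"
    by (rule sum.cong[OF refl], rule sum.swap)
  also have "\<dots> = (\<Sum>i\<in>I. \<Sum>c\<in>C. \<Sum>j\<in>J. f i j c)" by (rule sum.swap)
  also have "\<dots> = (\<Sum>i\<in>I. \<Sum>j\<in>J. \<Sum>c\<in>C. f i j c)"
    by (rule sum.cong[OF refl], rule sum.swap)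
  finally show ?thesis .
qed

definition fro :: "real mat \<Rightarrow> real mat \<Rightarrow> real" where
  "fro A C = (\<Sum>i<dim_row A. \<Sum>j<dim_col A. A $$ (i,j) * C $$ (i,j))"

lemma fro_mult_left:
  assumes "A \<in> carrier_mat n m" "L \<in> carrier_mat n p" "N \<in> carrier_mat p m"
  shows "fro A (L * N) = fro (transpose_mat L * A) N"
proof -
  have "fro A (L * N) = (\<Sum>i<n. \<Sum>j<m. \<Sum>c<p. A $$ (i,j) * L $$ (i,c) * N $$ (c,j))"
    using assms by (simp add: fro_def row_col_ix col_col_ix row_row_ix sum_distrib_left mult.assoc)
  also have "\<dots> = (\<Sum>c<p. \<Sum>j<m. \<Sum>i<n. A $$ (i,j) * L $$ (i,c) * N $$ (c,j))"
    by (rule sum3_rot[symmetric])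
  also have "\<dots> = fro (transpose_mat L * A) N"
    using assms by (simp add: fro_def row_col_ix col_col_ix row_row_ix sum_distrib_left sum_distrib_right mult_ac)
  finally show ?thesis .
qed

lemma fro_mult_right:
  assumes "A \<in> carrier_mat n m" "N \<in> carrier_mat n p" "M \<in> carrier_mat p m"
  shows "fro A (N * M) = fro (A * transpose_mat M) N"
proof -
  have "fro A (N * M) = (\<Sum>i<n. \<Sum>j<m. \<Sum>c<p. A $$ (i,j) * N $$ (i,c) * M $$ (c,j))"
    using assms by (simp add: fro_def row_col_ix col_col_ix row_row_ix sum_distrib_left mult.assoc)
  also have "\<dots> = (\<Sum>i<n. \<Sum>c<p. \<Sum>j<m. A $$ (i,j) * N $$ (i,c) * M $$ (c,j))"
    by (rule sum.cong[OF refl], rule sum.swap)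
  also have "\<dots> = fro (A * transpose_mat M) N"
    using assms by (simp add: fro_def row_col_ix col_col_ix row_row_ix sum_distrib_left sum_distrib_right mult_ac)
  finally show ?thesis .
qed

lemma fro_self_zero:
  assumes "A \<in> carrier_mat n m" "fro A A = 0"
  shows "A = 0\<^sub>m n m"
proof (rule eq_matI)
  fix i j assume ij: "i < dim_row (0\<^sub>m n m :: real mat)" "j < dim_col (0\<^sub>m n m :: real mat)"
  have nn: "\<And>i. 0 \<le> (\<Sum>j<m. A $$ (i,j) * A $$ (i,j))" by (intro sum_nonneg) simp
  have "(\<Sum>i<n. \<Sum>j<m. A $$ (i,j) * A $$ (i,j)) = 0" using assms by (simp add: fro_def)
  then have "\<forall>i\<in>{..<n}. (\<Sum>j<m. A $$ (i,j) * A $$ (i,j)) = 0"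
    by (subst (asm) sum_nonneg_eq_0_iff) (use nn in auto)
  then have "(\<Sum>j<m. A $$ (i,j) * A $$ (i,j)) = 0" using ij by auto
  then have "\<forall>j\<in>{..<m}. A $$ (i,j) * A $$ (i,j) = 0"
    by (subst (asm) sum_nonneg_eq_0_iff) auto
  then show "A $$ (i,j) = 0\<^sub>m n m $$ (i,j)" using ij by auto
qed (use assms in auto)

lemma fro_zero_left: "fro (0\<^sub>m n m) C = 0"
  by (simp add: fro_def)

lemma quad_fro0:
  assumes A: "A \<in> carrier_mat q s" and C: "C \<in> carrier_mat q s"
    and GY: "GY \<in> carrier_mat q q" and GS: "GS \<in> carrier_mat s s"
    and sym: "\<And>j l. j < s \<Longrightarrow> l < s \<Longrightarrow> GS $$ (l,j) = GS $$ (j,l)"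
  shows "(\<Sum>i<q. \<Sum>j<s. \<Sum>k<q. \<Sum>l<s. A $$ (i,j) * C $$ (k,l) * GY $$ (i,k) * GS $$ (j,l))
       = fro A (GY * C * GS)"
proof -
  have "fro A (GY * C * GS) = (\<Sum>i<q. \<Sum>j<s. \<Sum>l<s. \<Sum>k<q. A $$ (i,j) * C $$ (k,l) * GY $$ (i,k) * GS $$ (l,j))"
  proof -
    have ix: "(GY * C * GS) $$ (i,j) = (\<Sum>l<s. \<Sum>k<q. GY $$ (i,k) * C $$ (k,l) * GS $$ (l,j))"
      if "i < q" "j < s" for i j
    proof -
      have a: "(GY * C * GS) $$ (i,j) = (\<Sum>l<s. (GY * C) $$ (i,l) * GS $$ (l,j))"
        by (subst mult_ix) (use assms that in \<open>simp_all del: assoc_mult_mat\<close>)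
      show ?thesis unfolding a using assms that
        by (intro sum.cong refl) (simp add: row_col_ix sum_distrib_right)
    qed
    have "fro A (GY * C * GS) = (\<Sum>i<q. \<Sum>j<s. A $$ (i,j) * (GY * C * GS) $$ (i,j))"
      using A by (simp add: fro_def)
    also have "\<dots> = (\<Sum>i<q. \<Sum>j<s. A $$ (i,j) * (\<Sum>l<s. \<Sum>k<q. GY $$ (i,k) * C $$ (k,l) * GS $$ (l,j)))"
      by (intro sum.cong refl) (simp add: ix)
    also have "\<dots> = (\<Sum>i<q. \<Sum>j<s. \<Sum>l<s. \<Sum>k<q. A $$ (i,j) * C $$ (k,l) * GY $$ (i,k) * GS $$ (l,j))"
      by (simp add: sum_distrib_left mult_ac)
    finally show ?thesis .
  qed
  also have "\<dots> = (\<Sum>i<q. \<Sum>j<s. \<Sum>k<q. \<Sum>l<s. A $$ (i,j) * C $$ (k,l) * GY $$ (i,k) * GS $$ (l,j))"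
    by (rule sum.cong[OF refl], rule sum.cong[OF refl], rule sum.swap)
  also have "\<dots> = (\<Sum>i<q. \<Sum>j<s. \<Sum>k<q. \<Sum>l<s. A $$ (i,j) * C $$ (k,l) * GY $$ (i,k) * GS $$ (j,l))"
    using sym by (intro sum.cong refl) auto
  finally show ?thesis by simp
qed

lemma quad_fro:
  fixes A C LY LS :: "real mat"
  assumes A: "A \<in> carrier_mat q s" and C: "C \<in> carrier_mat q s"
    and LY: "LY \<in> carrier_mat q q" and LS: "LS \<in> carrier_mat s s"
  shows "(\<Sum>i<q. \<Sum>j<s. \<Sum>k<q. \<Sum>l<s. A $$ (i,j) * C $$ (k,l) * (LY * transpose_mat LY) $$ (i,k) * (LS * transpose_mat LS) $$ (j,l))
       = fro (transpose_mat LY * A * LS) (transpose_mat LY * C * LS)"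
proof -
  have LYt: "transpose_mat LY \<in> carrier_mat q q" and LSt: "transpose_mat LS \<in> carrier_mat s s"
    using LY LS by auto
  have sym: "(LS * transpose_mat LS) $$ (l,j) = (LS * transpose_mat LS) $$ (j,l)" if "j < s" "l < s" for j l
    using LS that by (simp add: row_row_ix mult.commute)
  have e1: "(LY * transpose_mat LY) * C * (LS * transpose_mat LS)
     = LY * ((transpose_mat LY * C * LS) * transpose_mat LS)"
  proof -
    have "(LY * transpose_mat LY) * C = LY * (transpose_mat LY * C)"
      by (rule assoc_mult_mat[OF LY LYt C])
    moreover have "(LY * (transpose_mat LY * C)) * (LS * transpose_mat LS)
        = LY * ((transpose_mat LY * C) * (LS * transpose_mat LS))"
      by (rule assoc_mult_mat[OF LY mult_carrier_mat[OF LYt C] mult_carrier_mat[OF LS LSt]])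
    moreover have "(transpose_mat LY * C) * (LS * transpose_mat LS) = ((transpose_mat LY * C) * LS) * transpose_mat LS"
      by (rule assoc_mult_mat[OF mult_carrier_mat[OF LYt C] LS LSt, symmetric])
    ultimately show ?thesis by simp
  qed
  have "(\<Sum>i<q. \<Sum>j<s. \<Sum>k<q. \<Sum>l<s. A $$ (i,j) * C $$ (k,l) * (LY * transpose_mat LY) $$ (i,k) * (LS * transpose_mat LS) $$ (j,l))
      = fro A ((LY * transpose_mat LY) * C * (LS * transpose_mat LS))"
    by (rule quad_fro0[OF A C _ _ sym]) (use LY LS in auto)
  also have "\<dots> = fro A (LY * ((transpose_mat LY * C * LS) * transpose_mat LS))" unfolding e1 ..
  also have "\<dots> = fro (transpose_mat LY * A) ((transpose_mat LY * C * LS) * transpose_mat LS)"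
    by (rule fro_mult_left[OF A LY]) (use LYt C LS in auto)
  also have "\<dots> = fro (transpose_mat LY * A * LS) (transpose_mat LY * C * LS)"
    using fro_mult_right[of "transpose_mat LY * A" q s "transpose_mat LY * C * LS" s "transpose_mat LS"] LYt A C LS LSt
    by simp
  finally show ?thesis .
qed

lemma delta_sum: "(b::nat) < n \<Longrightarrow> (\<Sum>c<n. f c * (if c = b then 1 else (0::real))) = f b"
  by (subst sum.remove[of "{..<n}" b]) auto

lemma svd_K:
  fixes Wr P Sig V :: "real mat"
  assumes W: "Wr \<in> carrier_mat q s" and svd: "is_svd Wr P Sig V"
    and W0: "\<And>a. a < q \<Longrightarrow> Wr $$ (a,0) = 0"
    and k: "k \<le> s"
  shows "(\<forall>b<k. V $$ (0,b) = 0) \<or> Wr * lead_cols k V * transpose_mat (lead_cols k V) = Wr"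
proof -
  note d = svd[unfolded is_svd_def]
  have P: "P \<in> carrier_mat q q" and PtP: "transpose_mat P * P = 1\<^sub>m q"
    using d W unfolding orthonormal_cols_def by auto
  have V: "V \<in> carrier_mat s s" and VtV: "transpose_mat V * V = 1\<^sub>m s"
    using d W unfolding orthonormal_cols_def by auto
  have Sig: "Sig \<in> carrier_mat q s" using d W by auto
  have off: "\<And>i j. i < q \<Longrightarrow> j < s \<Longrightarrow> i \<noteq> j \<Longrightarrow> Sig $$ (i,j) = 0" using d W by auto
  have nn: "\<And>i. i < min q s \<Longrightarrow> Sig $$ (i,i) \<ge> 0" using d W by auto
  have ord: "\<And>i j. i \<le> j \<Longrightarrow> j < min q s \<Longrightarrow> Sig $$ (j,j) \<le> Sig $$ (i,i)" using d W by auto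
  have Weq: "Wr = P * Sig * transpose_mat V" using d by auto
  have Vt: "transpose_mat V \<in> carrier_mat s s" using V by auto
  have SV: "Sig * transpose_mat V \<in> carrier_mat q s" using Sig V by auto
  have PtW: "transpose_mat P * Wr = Sig * transpose_mat V"
  proof -
    have "transpose_mat P * Wr = transpose_mat P * (P * (Sig * transpose_mat V))"
      unfolding Weq using P Sig Vt by (simp add: assoc_mult_mat)
    also have "\<dots> = (transpose_mat P * P) * (Sig * transpose_mat V)"
      using P SV by (simp add: assoc_mult_mat)
    also have "\<dots> = Sig * transpose_mat V" unfolding PtP by (rule left_mult_one_mat[OF SV])
    finally show ?thesis .
  qed
  have diag0: "Sig $$ (a,a) * V $$ (0,a) = 0" if "a < q" "a < s" for a
  proof -
    have s0: "0 < s" using that by auto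
    have "(transpose_mat P * Wr) $$ (a,0) = 0"
      using P W that s0 W0 by (simp add: row_col_ix col_col_ix)
    moreover have "(Sig * transpose_mat V) $$ (a,0) = (\<Sum>b<s. Sig $$ (a,b) * V $$ (0,b))"
      using Sig V that s0 by (simp add: row_col_ix row_row_ix)
    moreover have "(\<Sum>b<s. Sig $$ (a,b) * V $$ (0,b)) = (\<Sum>b<s. if b = a then Sig $$ (a,a) * V $$ (0,a) else 0)"
      using off that by (intro sum.cong refl) auto
    ultimately show ?thesis using PtW that by simp
  qed
  show ?thesis
  proof (cases "\<forall>b<k. V $$ (0,b) = 0")
    case True then show ?thesis by simp
  next
    case False
    then obtain j where j: "j < k" "V $$ (0,j) \<noteq> 0" by auto
    have sj: "j < q \<Longrightarrow> Sig $$ (j,j) = 0" using diag0[of j] j k by auto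
    have zero: "Sig $$ (a,b) = 0" if "a < q" "k \<le> b" "b < s" for a b
    proof (cases "a = b")
      case True
      have "j < q" using True that j by auto
      then have "Sig $$ (b,b) \<le> Sig $$ (j,j)" "Sig $$ (b,b) \<ge> 0"
        using ord[of j b] nn[of b] True that j by auto
      then show ?thesis using sj \<open>j < q\<close> True by auto
    qed (use off that in auto)
    let ?Vk = "lead_cols k V"
    have Vk: "?Vk \<in> carrier_mat s k" using V unfolding lead_cols_def by auto
    have Vkix: "\<And>c b. c < s \<Longrightarrow> b < k \<Longrightarrow> ?Vk $$ (c,b) = V $$ (c,b)"
      using V unfolding lead_cols_def by auto
    have orth: "(\<Sum>e<s. V $$ (e,c) * V $$ (e,b)) = (if c = b then 1 else 0)" if "c < s" "b < s" for c b
    proof -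
      have "(transpose_mat V * V) $$ (c,b) = (\<Sum>e<s. V $$ (e,c) * V $$ (e,b))"
        using V that by (simp add: col_col_ix)
      then show ?thesis using VtV that by simp
    qed
    have VtVk: "transpose_mat V * ?Vk = mat s k (\<lambda>(c,b). if c = b then 1 else 0)"
    proof (rule eq_matI)
      fix c b assume cb: "c < dim_row (mat s k (\<lambda>(c,b). if c = b then 1 else (0::real)))"
         "b < dim_col (mat s k (\<lambda>(c,b). if c = b then 1 else (0::real)))"
      then have "c < s" "b < k" by auto
      have "(transpose_mat V * ?Vk) $$ (c,b) = (\<Sum>e<s. V $$ (e,c) * ?Vk $$ (e,b))"
        using V Vk \<open>c < s\<close> \<open>b < k\<close> by (simp add: col_col_ix)
      also have "\<dots> = (\<Sum>e<s. V $$ (e,c) * V $$ (e,b))"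
        using Vkix \<open>b < k\<close> by (intro sum.cong refl) auto
      also have "\<dots> = (if c = b then 1 else 0)" using orth \<open>c < s\<close> \<open>b < k\<close> k by auto
      finally show "(transpose_mat V * ?Vk) $$ (c,b) = mat s k (\<lambda>(c,b). if c = b then 1 else (0::real)) $$ (c,b)"
        using \<open>c < s\<close> \<open>b < k\<close> by simp
    qed (use V Vk in auto)
    have key: "Sig * transpose_mat V * ?Vk * transpose_mat ?Vk = Sig * transpose_mat V"
    proof (rule eq_matI)
      fix a e assume ae: "a < dim_row (Sig * transpose_mat V)" "e < dim_col (Sig * transpose_mat V)"
      then have a: "a < q" and e: "e < s" using Sig V by auto
      have I: "mat s k (\<lambda>(c,b). if c = b then 1 else (0::real)) \<in> carrier_mat s k" by auto
      have "Sig * transpose_mat V * ?Vk * transpose_mat ?Vk = Sig * (transpose_mat V * ?Vk) * transpose_mat ?Vk"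
        using Sig Vt Vk by (simp add: assoc_mult_mat)
      also have "\<dots> = Sig * mat s k (\<lambda>(c,b). if c = b then 1 else 0) * transpose_mat ?Vk"
        unfolding VtVk ..
      finally have "(Sig * transpose_mat V * ?Vk * transpose_mat ?Vk) $$ (a,e)
          = (Sig * mat s k (\<lambda>(c,b). if c = b then 1 else 0) * transpose_mat ?Vk) $$ (a,e)" by simp
      also have "\<dots> = (\<Sum>b<k. (Sig * mat s k (\<lambda>(c,b). if c = b then 1 else 0)) $$ (a,b) * ?Vk $$ (e,b))"
        by (subst mult_ix) (use Sig Vk a e in \<open>simp_all del: assoc_mult_mat\<close>)
      also have "\<dots> = (\<Sum>b<k. Sig $$ (a,b) * V $$ (e,b))"
      proof (intro sum.cong refl)
        fix b assume "b \<in> {..<k}"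
        then have b: "b < k" by auto
        have "(Sig * mat s k (\<lambda>(c,b). if c = b then 1 else 0)) $$ (a,b)
            = (\<Sum>c<s. Sig $$ (a,c) * (if c = b then 1 else 0))"
          using Sig a b k by (auto simp: scalar_prod_def atLeast0LessThan intro!: sum.cong)
        also have "\<dots> = Sig $$ (a,b)" using b k by (intro delta_sum) auto
        finally show "(Sig * mat s k (\<lambda>(c,b). if c = b then 1 else 0)) $$ (a,b) * ?Vk $$ (e,b)
            = Sig $$ (a,b) * V $$ (e,b)" using Vkix e b by simp
      qed
      also have "\<dots> = (\<Sum>b<s. Sig $$ (a,b) * V $$ (e,b))"
        by (rule sum.mono_neutral_left) (use k zero a in auto)
      also have "\<dots> = (Sig * transpose_mat V) $$ (a,e)"
        using Sig V a e by (simp add: row_row_ix)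
      finally show "(Sig * transpose_mat V * ?Vk * transpose_mat ?Vk) $$ (a,e) = (Sig * transpose_mat V) $$ (a,e)" .
    qed (use Sig V Vk in auto)
    have PSV: "P * Sig * transpose_mat V = P * (Sig * transpose_mat V)"
      by (rule assoc_mult_mat[OF P Sig Vt])
    have "Wr * ?Vk * transpose_mat ?Vk = (P * (Sig * transpose_mat V)) * ?Vk * transpose_mat ?Vk"
      unfolding Weq PSV ..
    also have "\<dots> = (P * (Sig * transpose_mat V * ?Vk)) * transpose_mat ?Vk"
      using assoc_mult_mat[OF P SV Vk] by simp
    also have "\<dots> = P * (Sig * transpose_mat V * ?Vk * transpose_mat ?Vk)"
      by (rule assoc_mult_mat[OF P mult_carrier_mat[OF SV Vk]]) (use Vk in auto)
    also have "\<dots> = Wr" unfolding key Weq PSV ..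
    finally show ?thesis by simp
  qed
qed

lemma inv_m_props:
  assumes LS: "LS \<in> carrier_mat s s" and inv: "invertible_mat LS"
  shows "inv_m LS \<in> carrier_mat s s" "LS * inv_m LS = 1\<^sub>m s" "inv_m LS * LS = 1\<^sub>m s"
proof -
  obtain B where B: "LS * B = 1\<^sub>m (dim_row LS)" "B * LS = 1\<^sub>m (dim_row B)"
    using inv unfolding invertible_mat_def inverts_mat_def by auto
  have "dim_row B = s"
    using arg_cong[OF B(2), of dim_col] LS by simp
  moreover have "dim_col B = s"
    using arg_cong[OF B(1), of dim_col] LS by simp
  ultimately have Bc: "B \<in> carrier_mat s s" by auto
  have ex: "\<exists>B. B \<in> carrier_mat (dim_row LS) (dim_row LS) \<and>
                      LS * B = 1\<^sub>m (dim_row LS) \<and> B * LS = 1\<^sub>m (dim_row LS)"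
    using Bc B LS by (intro exI[of _ B]) auto
  from someI_ex[OF ex] show "inv_m LS \<in> carrier_mat s s" "LS * inv_m LS = 1\<^sub>m s" "inv_m LS * LS = 1\<^sub>m s"
    using LS unfolding inv_m_def by auto
qed

lemma LY_cancel:
  fixes \<Omega> :: "'a::euclidean_space set" and \<nu> :: "nat \<Rightarrow> 'a \<Rightarrow> real" and d :: "nat \<Rightarrow> real"
  assumes nu_L2: "\<And>i. i < q \<Longrightarrow> set_borel_measurable lborel \<Omega> (\<nu> i)
                     \<and> set_integrable lborel \<Omega> (\<lambda>y. (\<nu> i y)\<^sup>2)"
    and nu_basis: "\<And>c. (AE y in lborel. y \<in> \<Omega> \<longrightarrow> (\<Sum>i<q. c i * \<nu> i y) = 0) \<Longrightarrow> \<forall>i<q. c i = 0"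
    and LY: "LY \<in> carrier_mat q q" "gram_Y \<Omega> q \<nu> = LY * transpose_mat LY"
    and d: "\<And>a. a < q \<Longrightarrow> (\<Sum>i<q. LY $$ (i,a) * d i) = 0"
  shows "\<forall>i<q. d i = 0"
proof (rule MY_pos[OF nu_L2 nu_basis], assumption+)
  fix k assume k: "k < q"
  have g: "(LINT y:\<Omega>|lborel. \<nu> k y * \<nu> i y) = (\<Sum>a<q. LY $$ (k,a) * LY $$ (i,a))" if "i < q" for i
  proof -
    have "(LINT y:\<Omega>|lborel. \<nu> k y * \<nu> i y) = gram_Y \<Omega> q \<nu> $$ (k,i)"
      using k that unfolding gram_Y_def by simp
    also have "\<dots> = (\<Sum>a<q. LY $$ (k,a) * LY $$ (i,a))"
      unfolding LY(2) using LY(1) k that by (simp add: row_row_ix)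
    finally show ?thesis .
  qed
  have "(\<Sum>i<q. (LINT y:\<Omega>|lborel. \<nu> k y * \<nu> i y) * d i) = (\<Sum>i<q. \<Sum>a<q. LY $$ (k,a) * (LY $$ (i,a) * d i))"
    using g by (simp add: sum_distrib_left sum_distrib_right mult_ac)
  also have "\<dots> = (\<Sum>a<q. LY $$ (k,a) * (\<Sum>i<q. LY $$ (i,a) * d i))"
    by (subst sum.swap) (simp add: sum_distrib_left)
  also have "\<dots> = 0" using d by simp
  finally show "(\<Sum>i<q. (LINT y:\<Omega>|lborel. \<nu> k y * \<nu> i y) * d i) = 0" .
qed

theorem lemma5:
  fixes T :: real and \<Omega> :: "'a::euclidean_space set"
    and s q sh :: nat
    and \<psi> :: "nat \<Rightarrow> real \<Rightarrow> real" and \<nu> :: "nat \<Rightarrow> 'a \<Rightarrow> real" and x0 :: "'a \<Rightarrow> real"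
    and LS LY X Xp P Sig V :: "real mat"
  assumes T_pos: "T > 0"
    and dom: "open \<Omega>" "connected \<Omega>" "bounded \<Omega>" "\<Omega> \<noteq> {}"
    and psi_L2: "\<And>j. j < s \<Longrightarrow> set_borel_measurable lborel {0..T} (\<psi> j)
                     \<and> set_integrable lborel {0..T} (\<lambda>t. (\<psi> j t)\<^sup>2)"
    and nu_L2: "\<And>i. i < q \<Longrightarrow> set_borel_measurable lborel \<Omega> (\<nu> i)
                     \<and> set_integrable lborel \<Omega> (\<lambda>y. (\<nu> i y)\<^sup>2)"
    and nu_basis: "\<And>c. (AE y in lborel. y \<in> \<Omega> \<longrightarrow> (\<Sum>i<q. c i * \<nu> i y) = 0) \<Longrightarrow> \<forall>i<q. c i = 0"
    and s_pos: "s \<ge> 1"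
    and nodal: "\<psi> 0 0 = 1" "\<And>j. 0 < j \<Longrightarrow> j < s \<Longrightarrow> \<psi> j 0 = 0"
    and x0_L2: "set_borel_measurable lborel \<Omega> x0" "set_integrable lborel \<Omega> (\<lambda>y. (x0 y)\<^sup>2)"
    and LS: "LS \<in> carrier_mat s s" "upper_triangular LS" "invertible_mat LS"
            "gram_S T s \<psi> = LS * transpose_mat LS"
    and LY: "LY \<in> carrier_mat q q" "gram_Y \<Omega> q \<nu> = LY * transpose_mat LY"
    and X: "X \<in> carrier_mat q s" "init_ok \<Omega> q \<psi> \<nu> x0 X"
    and sh: "2 \<le> sh" "sh - 1 \<le> s"
    and svd: "is_svd (transpose_mat LY * ring X * LS) P Sig V"
    and proj: "is_proj_hat T \<Omega> q \<psi> \<nu> x0 (U_hat LS (lead_cols (sh - 1) V)) LS X Xp"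
  shows "ring Xp = ring X * LS * lead_cols (sh - 1) V * transpose_mat (lead_cols (sh - 1) V) * inv_m LS"
proof -
  define k where "k = sh - 1"
  have k1: "1 \<le> k" and ks: "k \<le> s" using sh unfolding k_def by auto
  define Vk where "Vk = lead_cols k V"
  define LSi where "LSi = inv_m LS"
  define R where "R = ring X"
  define U where "U = U_hat LS Vk"
  define Wr where "Wr = transpose_mat LY * R * LS"
  have LSc: "LS \<in> carrier_mat s s" using LS by auto
  note LSi_props = inv_m_props[OF LSc LS(3), folded LSi_def]
  have LSi: "LSi \<in> carrier_mat s s" and LSLSi: "LS * LSi = 1\<^sub>m s" and LSiLS: "LSi * LS = 1\<^sub>m s"
    using LSi_props by auto
  have LYc: "LY \<in> carrier_mat q q" using LY by auto
  have LYt: "transpose_mat LY \<in> carrier_mat q q" using LY by auto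
  have LSt: "transpose_mat LS \<in> carrier_mat s s" using LS by auto
  have Xc: "X \<in> carrier_mat q s" using X by auto
  have s0: "0 < s" using s_pos by auto
  have q0_or: "True" ..
  have LSlow: "LS $$ (e,0) = 0" if "0 < e" "e < s" for e
    using LS(1,2) that by (auto intro: upper_triangularD)
  have LS00: "LS $$ (0,0) \<noteq> 0"
  proof
    assume z: "LS $$ (0,0) = 0"
    have "(LSi * LS) $$ (0,0) = (\<Sum>e<s. LSi $$ (0,e) * LS $$ (e,0))"
      using LSi LSc s0 by (simp add: row_col_ix)
    also have "\<dots> = 0" using LSlow z by (intro sum.neutral) (metis lessThan_iff mult_zero_right neq0_conv)
    finally show False using LSiLS s0 by simp
  qed
  have LSi0: "LSi $$ (c,0) = (if c = 0 then 1 / LS $$ (0,0) else 0)" if "c < s" for c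
  proof -
    have "(LSi * LS) $$ (c,0) = (\<Sum>e<s. LSi $$ (c,e) * LS $$ (e,0))"
      using LSi LSc s0 that by (simp add: row_col_ix)
    also have "\<dots> = LSi $$ (c,0) * LS $$ (0,0)"
      by (subst sum.remove[of "{..<s}" 0]) (use s0 LSlow in auto)
    finally have "LSi $$ (c,0) * LS $$ (0,0) = (if c = 0 then 1 else 0)"
      using LSiLS that s0 by simp
    then show ?thesis using LS00 by (auto simp: field_simps)
  qed
  have Rc: "R \<in> carrier_mat q s" using Xc unfolding R_def ring_def by auto
  have R0: "R $$ (i,0) = 0" if "i < q" for i using Xc that s0 unfolding R_def ring_def by auto
  have Rj: "R $$ (i,j) = X $$ (i,j)" if "i < q" "j < s" "j \<noteq> 0" for i j
    using Xc that unfolding R_def ring_def by auto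
  have Wc: "Wr \<in> carrier_mat q s" using LYt Rc LSc unfolding Wr_def by auto
  have svd': "is_svd Wr P Sig V" using svd unfolding Wr_def R_def .
  have Vc: "V \<in> carrier_mat s s" and VtV: "transpose_mat V * V = 1\<^sub>m s"
    using svd' Wc unfolding is_svd_def orthonormal_cols_def by auto
  have LYtR0: "(transpose_mat LY * R) $$ (a,0) = 0" if "a < q" for a
    using LYc Rc that s0 R0 by (simp add: col_col_ix)
  have W0: "Wr $$ (a,0) = 0" if "a < q" for a
  proof -
    have "Wr $$ (a,0) = (\<Sum>c<s. (transpose_mat LY * R) $$ (a,c) * LS $$ (c,0))"
      unfolding Wr_def by (subst mult_ix) (use LYc Rc LSc that s0 in \<open>simp_all del: assoc_mult_mat\<close>)
    also have "\<dots> = 0"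
      by (subst sum.remove[of "{..<s}" 0]) (use s0 LSlow LYtR0 that in auto)
    finally show ?thesis .
  qed
  have K: "(\<forall>b<k. V $$ (0,b) = 0) \<or> Wr * Vk * transpose_mat Vk = Wr"
    using svd_K[OF Wc svd' W0 ks] unfolding Vk_def by auto
  have Vkc: "Vk \<in> carrier_mat s k" using Vc unfolding Vk_def lead_cols_def by auto
  have Vkt: "transpose_mat Vk \<in> carrier_mat k s" using Vkc by auto
  have Vkix: "Vk $$ (c,b) = V $$ (c,b)" if "c < s" "b < k" for c b
    using Vc that unfolding Vk_def lead_cols_def by auto
  have VktVk: "transpose_mat Vk * Vk = 1\<^sub>m k"
  proof (rule eq_matI)
    fix a b assume ab: "a < dim_row (1\<^sub>m k :: real mat)" "b < dim_col (1\<^sub>m k :: real mat)"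
    then have a: "a < k" and b: "b < k" by auto
    have "(transpose_mat Vk * Vk) $$ (a,b) = (\<Sum>e<s. Vk $$ (e,a) * Vk $$ (e,b))"
      using Vkc a b by (simp add: col_col_ix)
    also have "\<dots> = (\<Sum>e<s. V $$ (e,a) * V $$ (e,b))"
      using Vkix a b by (intro sum.cong refl) auto
    also have "\<dots> = (transpose_mat V * V) $$ (a,b)"
      using Vc a b ks by (simp add: col_col_ix)
    finally show "(transpose_mat Vk * Vk) $$ (a,b) = 1\<^sub>m k $$ (a,b)"
      using VtV a b ks by simp
  qed (use Vkc in auto)
  have Uc: "U \<in> carrier_mat s (Suc k)" using Vkc unfolding U_def U_hat_def by auto
  have Ut: "transpose_mat U \<in> carrier_mat (Suc k) s" using Uc by auto
  have U0: "U $$ (c,0) = LS $$ (0,c)" if "c < s" for c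
    using Vkc LSc that s0 unfolding U_def U_hat_def by auto
  have US: "U $$ (c,Suc b) = V $$ (c,b)" if "c < s" "b < k" for c b
    using Vkc that Vkix unfolding U_def U_hat_def by auto
  define G where "G = R * LS * Vk * transpose_mat Vk"
  define M where "M = G * LSi"
  have Gc: "G \<in> carrier_mat q s" using Rc LSc Vkc unfolding G_def by auto
  have Mc: "M \<in> carrier_mat q s" using Gc LSi unfolding M_def by auto
  have LYtG: "transpose_mat LY * G = Wr * Vk * transpose_mat Vk"
  proof -
    have RL: "R * LS \<in> carrier_mat q s" using Rc LSc by auto
    have RLV: "R * LS * Vk \<in> carrier_mat q k" using RL Vkc by auto
    have a1: "transpose_mat LY * (R * LS * Vk * transpose_mat Vk) = (transpose_mat LY * (R * LS * Vk)) * transpose_mat Vk"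
      by (rule assoc_mult_mat[symmetric, OF LYt RLV Vkt])
    have a2: "transpose_mat LY * (R * LS * Vk) = (transpose_mat LY * (R * LS)) * Vk"
      by (rule assoc_mult_mat[symmetric, OF LYt RL Vkc])
    have a3: "transpose_mat LY * (R * LS) = transpose_mat LY * R * LS"
      by (rule assoc_mult_mat[symmetric, OF LYt Rc LSc])
    show ?thesis unfolding G_def Wr_def a1 a2 a3 ..
  qed
  have G0: "G $$ (i,0) = 0" if "i < q" for i
  proof (cases "\<forall>b<k. V $$ (0,b) = 0")
    case True
    have "G $$ (i,0) = (\<Sum>b<k. (R * LS * Vk) $$ (i,b) * transpose_mat Vk $$ (b,0))"
      unfolding G_def by (subst mult_ix) (use Rc LSc Vkc that s0 in \<open>simp_all del: assoc_mult_mat\<close>)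
    also have "\<dots> = 0" using True Vkix Vkc s0 by (intro sum.neutral) auto
    finally show ?thesis .
  next
    case False
    then have WK: "Wr * Vk * transpose_mat Vk = Wr" using K by auto
    have "\<forall>i<q. G $$ (i,0) = 0"
    proof (rule LY_cancel[OF nu_L2 nu_basis LY])
      fix a assume a: "a < q"
      have "(transpose_mat LY * G) $$ (a,0) = (\<Sum>i<q. LY $$ (i,a) * G $$ (i,0))"
        using LYc Gc a s0 by (simp add: col_col_ix)
      moreover have "(transpose_mat LY * G) $$ (a,0) = 0" unfolding LYtG WK using W0 a by simp
      ultimately show "(\<Sum>i<q. LY $$ (i,a) * G $$ (i,0)) = 0" by simp
    qed
    then show ?thesis using that by auto
  qed
  have M0: "M $$ (i,0) = 0" if "i < q" for i
  proof -
    have "M $$ (i,0) = (\<Sum>c<s. G $$ (i,c) * LSi $$ (c,0))"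
      unfolding M_def by (subst mult_ix) (use Gc LSi that s0 in \<open>simp_all del: assoc_mult_mat\<close>)
    also have "\<dots> = 0"
      by (subst sum.remove[of "{..<s}" 0]) (use s0 LSi0 G0 that in auto)
    finally show ?thesis .
  qed
  define C0 where "C0 = mat q s (\<lambda>(i,j). if j = 0 then X $$ (i,0) else 0)"
  define Xc where "Xc = C0 + M"
  have XcC: "Xc \<in> carrier_mat q s" unfolding Xc_def C0_def using Mc by auto
  have Xc0: "Xc $$ (i,0) = X $$ (i,0)" if "i < q" for i
    unfolding Xc_def C0_def using Mc M0 that s0 by auto
  have Xcj: "Xc $$ (i,j) = M $$ (i,j)" if "i < q" "j < s" "j \<noteq> 0" for i j
    unfolding Xc_def C0_def using Mc that by auto
  define Zc where "Zc = mat q (Suc k) (\<lambda>(i,b). if b = 0 then X $$ (i,0) else (R * LS * Vk) $$ (i, b - 1))"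
  have Zcc: "Zc \<in> carrier_mat q (Suc k)" unfolding Zc_def by auto
  have RLV: "R * LS * Vk \<in> carrier_mat q k" using Rc LSc Vkc by auto
  define H where "H = mat q s (\<lambda>(i,c). X $$ (i,0) * LS $$ (0,c)) + G"
  have Hc: "H \<in> carrier_mat q s" unfolding H_def using Gc by auto
  have ZU: "Zc * transpose_mat U = H"
  proof (rule eq_matI)
    fix i c assume ic: "i < dim_row H" "c < dim_col H"
    then have i: "i < q" and c: "c < s" using Hc by auto
    have "(Zc * transpose_mat U) $$ (i,c) = (\<Sum>b<Suc k. Zc $$ (i,b) * U $$ (c,b))"
      using Zcc Uc i c by (simp add: row_row_ix)
    also have "\<dots> = Zc $$ (i,0) * U $$ (c,0) + (\<Sum>b<k. Zc $$ (i,Suc b) * U $$ (c,Suc b))"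
      by (rule sum.lessThan_Suc_shift)
    also have "\<dots> = X $$ (i,0) * LS $$ (0,c) + (\<Sum>b<k. (R * LS * Vk) $$ (i,b) * Vk $$ (c,b))"
      using i c U0 US Vkix unfolding Zc_def by simp
    also have "(\<Sum>b<k. (R * LS * Vk) $$ (i,b) * Vk $$ (c,b)) = G $$ (i,c)"
      unfolding G_def by (subst mult_ix[where A="R * LS * Vk" and B="transpose_mat Vk" and i=i and j=c]) (use RLV Vkc Rc i c in \<open>simp_all del: assoc_mult_mat\<close>)
    finally show "(Zc * transpose_mat U) $$ (i,c) = H $$ (i,c)"
      unfolding H_def using Gc i c by simp
  qed (use Zcc Uc Hc in auto)
  have HL: "H * LSi = Xc"
  proof -
    have "H * LSi = mat q s (\<lambda>(i,c). X $$ (i,0) * LS $$ (0,c)) * LSi + G * LSi"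
      unfolding H_def by (rule add_mult_distrib_mat[OF _ Gc LSi]) auto
    also have "mat q s (\<lambda>(i,c). X $$ (i,0) * LS $$ (0,c)) * LSi = C0"
    proof (rule eq_matI)
      fix i j assume ij: "i < dim_row C0" "j < dim_col C0"
      then have i: "i < q" and j: "j < s" unfolding C0_def by auto
      have "(mat q s (\<lambda>(i,c). X $$ (i,0) * LS $$ (0,c)) * LSi) $$ (i,j)
          = (\<Sum>c<s. X $$ (i,0) * LS $$ (0,c) * LSi $$ (c,j))"
        using LSi i j by (simp add: scalar_prod_def atLeast0LessThan)
      also have "\<dots> = X $$ (i,0) * (LS * LSi) $$ (0,j)"
        using LSc LSi j s0 by (simp add: row_col_ix sum_distrib_left mult.assoc)
      also have "\<dots> = C0 $$ (i,j)" unfolding LSLSi C0_def using i j s0 by auto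
      finally show "(mat q s (\<lambda>(i,c). X $$ (i,0) * LS $$ (0,c)) * LSi) $$ (i,j) = C0 $$ (i,j)" .
    qed (use LSi in \<open>auto simp: C0_def\<close>)
    finally show ?thesis unfolding Xc_def M_def .
  qed
  have Xc_hat: "Xc = Zc * (transpose_mat U * LSi)"
    using assoc_mult_mat[OF Zcc Ut LSi] ZU HL by simp
  have Xc_in: "in_hatSY q U LS Xc"
    unfolding in_hatSY_def LSi_def[symmetric] using Xc_hat Zcc Uc by auto
  have stf_eq: "stfun \<psi> \<nu> Xc 0 y = stfun \<psi> \<nu> X 0 y" for y
    using stfun_at0[of Xc q s \<psi> \<nu> y, OF XcC s_pos nodal] stfun_at0[of X q s \<psi> \<nu> y, OF Xc s_pos nodal] Xc0
    by simp
  have Xc_init: "init_ok \<Omega> q \<psi> \<nu> x0 Xc"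
    using X(2) unfolding init_ok_def stf_eq .
  have UU: "U_hat LS (lead_cols (sh - 1) V) = U" unfolding U_def Vk_def k_def ..
  have Xpc: "Xp \<in> carrier_mat q s" and Xp_in: "in_hatSY q U LS Xp" and Xp_init: "init_ok \<Omega> q \<psi> \<nu> x0 Xp"
    and orth: "\<And>Z. Z \<in> carrier_mat q s \<Longrightarrow> in_hatSY q U LS Z \<Longrightarrow> init_ok \<Omega> q \<psi> \<nu> x0 Z \<Longrightarrow>
        st_inner T \<Omega> (stfun \<psi> \<nu> (X - Xp)) (stfun \<psi> \<nu> (Z - Xp)) = 0"
    using proj Xc unfolding is_proj_hat_def UU by auto
  obtain Zp where Zpc: "Zp \<in> carrier_mat q (Suc k)" and Xp_hat: "Xp = Zp * (transpose_mat U * LSi)"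
    using Xp_in Uc unfolding in_hatSY_def LSi_def[symmetric] by auto
  have Xp0: "Xp $$ (i,0) = X $$ (i,0)" if "i < q" for i
    using init_col0[OF nu_L2 nu_basis x0_L2 s_pos nodal Xpc Xp_init Xc X(2)] that by auto
  define D where "D = Xc - Xp"
  have Dc: "D \<in> carrier_mat q s" unfolding D_def using XcC Xpc by auto
  have D0: "D $$ (i,0) = 0" if "i < q" for i
    unfolding D_def using XcC Xpc that s0 Xc0 Xp0 by simp
  have o: "st_inner T \<Omega> (stfun \<psi> \<nu> (X - Xp)) (stfun \<psi> \<nu> D) = 0"
    using orth[OF XcC Xc_in Xc_init] unfolding D_def .
  define quadf where "quadf A C = (\<Sum>a<q. \<Sum>b<s. \<Sum>c<q. \<Sum>d<s. A $$ (a,b) * C $$ (c,d) *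
      (LY * transpose_mat LY) $$ (a,c) * (LS * transpose_mat LS) $$ (b,d))" for A C :: "real mat"
  have gy: "(LINT y:\<Omega>|lborel. \<nu> a y * \<nu> c y) = (LY * transpose_mat LY) $$ (a,c)" if "a < q" "c < q" for a c
  proof -
    have "(LINT y:\<Omega>|lborel. \<nu> a y * \<nu> c y) = gram_Y \<Omega> q \<nu> $$ (a,c)"
      using that unfolding gram_Y_def by simp
    then show ?thesis unfolding LY(2) .
  qed
  have gs: "(LINT t:{0..T}|lborel. \<psi> b t * \<psi> d t) = (LS * transpose_mat LS) $$ (b,d)" if "b < s" "d < s" for b d
  proof -
    have "(LINT t:{0..T}|lborel. \<psi> b t * \<psi> d t) = gram_S T s \<psi> $$ (b,d)"
      using that unfolding gram_S_def by simp
    then show ?thesis unfolding LS(4) .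
  qed
  have st_quad: "st_inner T \<Omega> (stfun \<psi> \<nu> A) (stfun \<psi> \<nu> C) = quadf A C"
    if A: "A \<in> carrier_mat q s" and C: "C \<in> carrier_mat q s" for A C
  proof -
    have "st_inner T \<Omega> (stfun \<psi> \<nu> A) (stfun \<psi> \<nu> C) =
      (\<Sum>i<q. \<Sum>j<s. \<Sum>k<q. \<Sum>l<s. A $$ (i,j) * C $$ (k,l) * (LINT y:\<Omega>|lborel. \<nu> i y * \<nu> k y)
        * (LINT t:{0..T}|lborel. \<psi> j t * \<psi> l t))"
      by (rule gram_formula[OF psi_L2 nu_L2 A C])
    also have "\<dots> = quadf A C"
      unfolding quadf_def by (intro sum.cong refl) (simp add: gy gs)
    finally show ?thesis .
  qed
  have qf: "quadf A C = fro (transpose_mat LY * A * LS) (transpose_mat LY * C * LS)"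
    if A: "A \<in> carrier_mat q s" and C: "C \<in> carrier_mat q s" for A C
    unfolding quadf_def by (rule quad_fro[OF A C LYc LSc])
  have XXp: "X - Xp \<in> carrier_mat q s" and XXc: "X - Xc \<in> carrier_mat q s" using Xc Xpc XcC by auto
  have ent: "(X - Xp) $$ (a,b) = (X - Xc) $$ (a,b) + D $$ (a,b)" if "a < q" "b < s" for a b
    unfolding D_def using that Xc Xpc XcC by simp
  have split: "quadf (X - Xp) D = quadf (X - Xc) D + quadf D D"
  proof -
    have "quadf (X - Xp) D = (\<Sum>a<q. \<Sum>b<s. \<Sum>c<q. \<Sum>d<s. ((X - Xc) $$ (a,b) + D $$ (a,b)) * D $$ (c,d) *
      (LY * transpose_mat LY) $$ (a,c) * (LS * transpose_mat LS) $$ (b,d))"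
      unfolding quadf_def by (intro sum.cong refl) (simp add: ent)
    also have "\<dots> = quadf (X - Xc) D + quadf D D"
      unfolding quadf_def by (simp add: distrib_right sum.distrib)
    finally show ?thesis .
  qed
  define E where "E = transpose_mat LY * (X - Xc) * LS"
  define WD where "WD = transpose_mat LY * D * LS"
  have Ec: "E \<in> carrier_mat q s" unfolding E_def using LYt XXc LSc by auto
  have WDc: "WD \<in> carrier_mat q s" unfolding WD_def using LYt Dc LSc by auto
  have sum0: "fro E WD + fro WD WD = 0"
    using o st_quad[OF XXp Dc] split qf[OF XXc Dc] qf[OF Dc Dc] unfolding E_def WD_def by simp
  have XR: "X - Xc = R - M"
  proof (rule eq_matI)
    fix i j assume "i < dim_row (R - M)" "j < dim_col (R - M)"
    then have i: "i < q" and j: "j < s" using Mc by auto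
    show "(X - Xc) $$ (i,j) = (R - M) $$ (i,j)"
    proof (cases "j = 0")
      case True then show ?thesis using i j Xc XcC Mc Rc Xc0 R0 M0 by simp
    next
      case False then show ?thesis using i j Xc XcC Mc Rc Xcj Rj by simp
    qed
  qed (use Xc XcC Mc Rc in auto)
  have MLS: "M * LS = G"
  proof -
    have "M * LS = G * (LSi * LS)" unfolding M_def by (rule assoc_mult_mat[OF Gc LSi LSc])
    also have "\<dots> = G" unfolding LSiLS by (rule right_mult_one_mat[OF Gc])
    finally show ?thesis .
  qed
  have E_eq: "E = Wr - Wr * Vk * transpose_mat Vk"
  proof -
    have "E = transpose_mat LY * (R - M) * LS" unfolding E_def XR ..
    also have "\<dots> = (transpose_mat LY * R - transpose_mat LY * M) * LS"
      by (subst mult_minus_distrib_mat[OF LYt Rc Mc]) rule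
    also have "\<dots> = transpose_mat LY * R * LS - transpose_mat LY * M * LS"
      by (rule minus_mult_distrib_mat) (use LYt Rc Mc LSc in auto)
    also have "transpose_mat LY * M * LS = transpose_mat LY * G"
      using assoc_mult_mat[OF LYt Mc LSc] MLS by simp
    finally show ?thesis unfolding LYtG Wr_def .
  qed
  have WVk: "Wr * Vk \<in> carrier_mat q k" using Wc Vkc by auto
  have EVk: "E * Vk = 0\<^sub>m q k"
  proof -
    have "E * Vk = Wr * Vk - Wr * Vk * transpose_mat Vk * Vk"
      unfolding E_eq by (rule minus_mult_distrib_mat) (use Wc Vkc Vkt in auto)
    also have "Wr * Vk * transpose_mat Vk * Vk = Wr * Vk"
      using assoc_mult_mat[OF WVk Vkt Vkc] VktVk right_mult_one_mat[OF WVk] by simp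
    finally show ?thesis using WVk by simp
  qed
  have core: "fro E WD = 0"
  proof (cases "\<forall>b<k. V $$ (0,b) = 0")
    case False
    then have "Wr * Vk * transpose_mat Vk = Wr" using K by auto
    then have "E = 0\<^sub>m q s" unfolding E_eq using Wc by simp
    then show ?thesis by (simp add: fro_zero_left)
  next
    case True
    define Zd where "Zd = Zc - Zp"
    have Zdc: "Zd \<in> carrier_mat q (Suc k)" unfolding Zd_def using Zcc Zpc by auto
    have ULc: "transpose_mat U * LSi \<in> carrier_mat (Suc k) s" using Ut LSi by auto
    have D_hat: "D = Zd * (transpose_mat U * LSi)"
      unfolding D_def Xc_hat Xp_hat Zd_def by (rule minus_mult_distrib_mat[OF Zcc Zpc ULc, symmetric])
    have ULL: "(transpose_mat U * LSi) * LS = transpose_mat U"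
      using assoc_mult_mat[OF Ut LSi LSc] LSiLS right_mult_one_mat[OF Ut] by simp
    have DLS: "D * LS = Zd * transpose_mat U"
      unfolding D_hat using assoc_mult_mat[OF Zdc ULc LSc] ULL by simp
    have WD_eq: "WD = transpose_mat LY * (Zd * transpose_mat U)"
      unfolding WD_def using assoc_mult_mat[OF LYt Dc LSc] DLS by simp
    have ZdU: "Zd * transpose_mat U \<in> carrier_mat q s" using Zdc Ut by auto
    have LYE: "LY * E \<in> carrier_mat q s" using LYc Ec by auto
    have f1: "fro E WD = fro (LY * E * U) Zd"
    proof -
      have "fro E WD = fro (transpose_mat (transpose_mat LY) * E) (Zd * transpose_mat U)"
        unfolding WD_eq by (rule fro_mult_left[OF Ec LYt ZdU])
      also have "\<dots> = fro (LY * E) (Zd * transpose_mat U)" by simp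
      also have "\<dots> = fro (LY * E * transpose_mat (transpose_mat U)) Zd"
        by (rule fro_mult_right[OF LYE Zdc Ut])
      finally show ?thesis by simp
    qed
    have LYEVk: "LY * E * Vk = 0\<^sub>m q k"
      using assoc_mult_mat[OF LYc Ec Vkc] EVk LYc by simp
    have QS: "(LY * E * U) $$ (a, Suc b) = 0" if "a < q" "b < k" for a b
    proof -
      have "(LY * E * U) $$ (a, Suc b) = (\<Sum>c<s. (LY * E) $$ (a,c) * U $$ (c, Suc b))"
        by (subst mult_ix[where A="LY * E" and B=U and i=a and j="Suc b"]) (use LYE LYc Ec Uc that in \<open>simp_all del: assoc_mult_mat\<close>)
      also have "\<dots> = (\<Sum>c<s. (LY * E) $$ (a,c) * Vk $$ (c, b))"
        using US Vkix that by (intro sum.cong refl) auto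
      also have "\<dots> = (LY * E * Vk) $$ (a,b)"
        by (subst mult_ix[where A="LY * E" and B=Vk and i=a and j=b]) (use LYE LYc Ec Vkc that in \<open>simp_all del: assoc_mult_mat\<close>)
      also have "\<dots> = 0" unfolding LYEVk using that by simp
      finally show ?thesis .
    qed
    have Zd0: "Zd $$ (i,0) = 0" if "i < q" for i
    proof -
      have "(D * LS) $$ (i,0) = (\<Sum>c<s. D $$ (i,c) * LS $$ (c,0))"
        by (subst mult_ix[where A=D and B=LS and i=i and j=0]) (use Dc LSc that s0 in \<open>simp_all del: assoc_mult_mat\<close>)
      also have "\<dots> = 0"
        by (subst sum.remove[of "{..<s}" 0]) (use s0 LSlow D0 that in auto)
      finally have a: "(D * LS) $$ (i,0) = 0" .
      have "(Zd * transpose_mat U) $$ (i,0) = (\<Sum>b<Suc k. Zd $$ (i,b) * U $$ (0,b))"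
        using Zdc Uc that s0 by (simp add: row_row_ix)
      also have "\<dots> = Zd $$ (i,0) * U $$ (0,0) + (\<Sum>b<k. Zd $$ (i,Suc b) * U $$ (0,Suc b))"
        by (rule sum.lessThan_Suc_shift)
      also have "\<dots> = Zd $$ (i,0) * LS $$ (0,0)"
        using U0 US True s0 by simp
      finally have "Zd $$ (i,0) * LS $$ (0,0) = 0" using a DLS by simp
      then show ?thesis using LS00 by simp
    qed
    have "fro (LY * E * U) Zd = 0"
      unfolding fro_def
    proof (intro sum.neutral ballI)
      fix a b assume a: "a \<in> {..<dim_row (LY * E * U)}" and b: "b \<in> {..<dim_col (LY * E * U)}"
      then have a': "a < q" and b': "b < Suc k" using LYE Uc by auto
      show "(LY * E * U) $$ (a,b) * Zd $$ (a,b) = 0"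
      proof (cases b)
        case 0 then show ?thesis using Zd0 a' by simp
      next
        case (Suc b0) then show ?thesis using QS a' b' by simp
      qed
    qed
    then show ?thesis using f1 by simp
  qed
  have WD0: "WD = 0\<^sub>m q s"
    using fro_self_zero[OF WDc] sum0 core by simp
  have LYD: "transpose_mat LY * D = 0\<^sub>m q s"
  proof -
    have LYDc: "transpose_mat LY * D \<in> carrier_mat q s" using LYt Dc by auto
    have "transpose_mat LY * D = (transpose_mat LY * D) * (LS * LSi)"
      unfolding LSLSi using right_mult_one_mat[OF LYDc] by simp
    also have "\<dots> = WD * LSi"
      unfolding WD_def using assoc_mult_mat[OF LYDc LSc LSi] by simp
    also have "\<dots> = 0\<^sub>m q s" unfolding WD0 using LSi by simp
    finally show ?thesis .
  qed
  have Dz: "D $$ (i,j) = 0" if "i < q" "j < s" for i j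
  proof -
    have "\<forall>i<q. D $$ (i,j) = 0"
    proof (rule LY_cancel[OF nu_L2 nu_basis LY])
      fix a assume a: "a < q"
      have "(transpose_mat LY * D) $$ (a,j) = (\<Sum>i<q. LY $$ (i,a) * D $$ (i,j))"
        using LYc Dc a that by (simp add: col_col_ix)
      then show "(\<Sum>i<q. LY $$ (i,a) * D $$ (i,j)) = 0" using LYD a that by simp
    qed
    then show ?thesis using that by auto
  qed
  have XpXc: "Xp $$ (i,j) = Xc $$ (i,j)" if "i < q" "j < s" for i j
    using Dz[OF that] that XcC Xpc unfolding D_def by simp
  have "ring Xp = M"
  proof (rule eq_matI)
    fix i j assume "i < dim_row M" "j < dim_col M"
    then have i: "i < q" and j: "j < s" using Mc by auto
    show "ring Xp $$ (i,j) = M $$ (i,j)"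
      using Xpc i j M0 XpXc Xcj unfolding ring_def by auto
  qed (use Xpc Mc in \<open>auto simp: ring_def\<close>)
  then show ?thesis unfolding M_def G_def R_def Vk_def k_def LSi_def .
qed

end
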